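(* For all integers $m\ge1$, $r\ge0$ and $n\ge1$, $$\mathcal D_{m,r}(n,x)=(-1)^n\det M_n,$$ where $M_n$ is the $(n+1)\times(n+1)$ matrix with rows and columns indexed by $0,\dots,n$, whose row $0$ is $(1,x,x^2,\dots,x^n)$ and whose row $i$ for $1\le i\le n$ is $\big(w_{m,r}(0,i-1),w_{m,r}(1,i-1),\dots,w_{m,r}(n,i-1)\big)$; explicitly $$M_n=\begin{pmatrix}1&x&\cdots&x^{n-1}&x^n\\ 1&w_{m,r}(1,0)&\cdots&w_{m,r}(n-1,0)&w_{m,r}(n,0)\\ 0&1&\cdots&w_{m,r}(n-1,1)&w_{m,r}(n,1)\\ \vdots&&\ddots&&\vdots\\ 0&0&\cdots&1&w_{m,r}(n,n-1)\end{pmatrix}.$$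
   Context: For integers $m\ge1$, $n,k,r\ge0$: the $r$-Whitney numbers of the first kind $w_{m,r}(n,k)$ are defined by $\sum_{n\ge k}w_{m,r}(n,k)\frac{z^n}{n!}=(1+mz)^{-r/m}\frac{\ln^k(1+mz)}{m^kk!}$ (so $w_{m,r}(n,n)=1$ and $w_{m,r}(n,k)=0$ for $k>n$); the $r$-Whitney numbers of the second kind $W_{m,r}(n,k)$ by $\sum_{n\ge k}W_{m,r}(n,k)\frac{z^n}{n!}=\frac{e^{rz}}{k!}\left(\frac{e^{mz}-1}{m}\right)^k$; and the $r$-Dowling polynomial is $\mathcal D_{m,r}(n,u):=\sum_{k=0}^nW_{m,r}(n,k)u^k$. *)

theory Defs
  imports "HOL-Computational_Algebra.Formal_Power_Series" "Jordan_Normal_Form.Determinant"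
begin

text \<open>Here fps_binomial a = (1+z)^a and fps_ln 1 = ln(1+z);
  composing with m z gives the series in m z.\<close>
definition whitney1 :: "nat \<Rightarrow> nat \<Rightarrow> nat \<Rightarrow> nat \<Rightarrow> real" where
  "whitney1 m r n k =
     fact n * fps_nth ((fps_binomial (- (real r / real m)) oo (fps_const (real m) * fps_X))
               * ((fps_ln 1 oo (fps_const (real m) * fps_X)) ^ k)
               * fps_const (1 / (real m ^ k * fact k))) n"

definition whitney2 :: "nat \<Rightarrow> nat \<Rightarrow> nat \<Rightarrow> nat \<Rightarrow> real" where
  "whitney2 m r n k =
     fact n * fps_nth (fps_exp (real r) * fps_const (1 / fact k)
               * (fps_const (1 / real m) * (fps_exp (real m) - 1)) ^ k) n"

definition dowling :: "nat \<Rightarrow> nat \<Rightarrow> nat \<Rightarrow> real \<Rightarrow> real" where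
  "dowling m r n u = (\<Sum>k=0..n. whitney2 m r n k * u ^ k)"

end

theory Submission
  imports Defs
begin

lemma L1:
  fixes c :: real and u :: "real fps"
  assumes "fps_nth u 0 = 0"
  shows "(fps_const c * fps_X) oo u = fps_const c * u"
  using assms by (simp add: fps_compose_mult_distrib)

lemma L2:
  fixes c :: real assumes "c \<noteq> 0"
  shows "fps_ln 1 oo (fps_exp c - 1) = fps_const c * fps_X"
proof -
  have v: "fps_exp c - 1 = (fps_exp 1 - 1) oo (fps_const c * fps_X)"
    by (simp add: fps_compose_sub_distrib)
  have "fps_ln (1::real) oo (fps_exp 1 - 1) = fps_X"
    by (simp add: fps_ln_fps_exp_inv fps_inv_fps_exp_compose)
  then show ?thesis unfolding v
    by (subst fps_compose_assoc) auto
qed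

lemma L3:
  fixes c d :: real
  shows "fps_binomial c oo (fps_exp d - 1) = fps_exp (c*d)"
proof -
  define B where "B = (fps_binomial c :: real fps)"
  define v where "v = (fps_exp d - 1 :: real fps)"
  have v0: "fps_nth v 0 = 0" by (simp add: v_def)
  have "fps_deriv B = (fps_const c * B) / (1 + fps_X)"
    unfolding B_def by (subst fps_binomial_ODE_unique) simp
  hence "(1 + fps_X) * fps_deriv B = fps_const c * B"
  proof -
    have "(1 + fps_X) * inverse (1 + fps_X :: real fps) = 1"
      by (simp add: inverse_mult_eq_1')
    thus ?thesis using \<open>fps_deriv B = _\<close> by (simp add: fps_divide_unit)
  qed
  hence "((1 + fps_X) oo v) * (fps_deriv B oo v) = fps_const c * (B oo v)"
    by (metis fps_compose_mult_distrib v0 fps_const_compose)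
  hence e: "fps_exp d * (fps_deriv B oo v) = fps_const c * (B oo v)"
    using v0 by (simp add: fps_compose_add_distrib v_def)
  have "fps_deriv (B oo v) = (fps_deriv B oo v) * (fps_const d * fps_exp d)"
    using v0 by (simp add: fps_compose_deriv v_def)
  also have "\<dots> = fps_const (c*d) * (B oo v)"
    using e by (simp add: algebra_simps flip: fps_const_mult)
  finally have "B oo v = fps_const (fps_nth (B oo v) 0) * fps_exp (c*d)"
    using fps_exp_unique_ODE by blast
  thus ?thesis by (simp add: B_def v_def)
qed

definition FF :: "nat \<Rightarrow> nat \<Rightarrow> nat \<Rightarrow> real fps" where
  "FF m r k = (fps_binomial (- (real r / real m)) oo (fps_const (real m) * fps_X))
               * ((fps_ln 1 oo (fps_const (real m) * fps_X)) ^ k)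
               * fps_const (1 / (real m ^ k * fact k))"

definition UU :: "nat \<Rightarrow> real fps" where
  "UU m = fps_const (1 / real m) * (fps_exp (real m) - 1)"

lemma UU0: "fps_nth (UU m) 0 = 0" by (simp add: UU_def)

lemma L4:
  assumes "m \<noteq> 0"
  shows "fps_exp (real r) * (FF m r i oo UU m) = fps_const (1 / fact i) * fps_X ^ i"
proof -
  have mu: "(fps_const (real m) * fps_X) oo UU m = fps_exp (real m) - 1"
  proof -
    have "fps_const (real m) * fps_const (1 / real m) = (1::real fps)"
    proof -
      have "real m * (1 / real m) = 1" using assms by simp
      thus ?thesis by (simp only: fps_const_mult fps_const_1_eq_1)
    qed
    thus ?thesis by (simp add: L1 UU0 UU_def flip: mult.assoc)
  qed
  have a: "(fps_binomial (- (real r / real m)) oo (fps_const (real m) * fps_X)) oo UU m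
      = fps_exp (- real r)"
    using assms by (simp add: mu L3 UU0 flip: fps_compose_assoc)
  have b: "(fps_ln 1 oo (fps_const (real m) * fps_X)) oo UU m = fps_const (real m) * fps_X"
    using assms by (simp add: mu L2 UU0 flip: fps_compose_assoc)
  have "FF m r i oo UU m = fps_exp (- real r) * (fps_const (real m) * fps_X) ^ i
        * fps_const (1 / (real m ^ i * fact i))"
    unfolding FF_def fps_compose_mult_distrib[OF UU0] fps_const_compose
      fps_compose_power[OF UU0, symmetric] a b ..
  also have "\<dots> = fps_exp (- real r) * (fps_const (1 / fact i) * fps_X ^ i)"
  proof -
    have h: "real m ^ i * (1/(fact i * real m^i)) = 1/fact i" using assms by simp
    show ?thesis using assms by (simp add: power_mult_distrib fps_const_power algebra_simps h)
  qed
  finally show ?thesis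
    by (simp flip: mult.assoc fps_exp_add_mult)
qed

lemma w2_eq: "whitney2 m r k j = fact k / fact j * fps_nth (fps_exp (real r) * UU m ^ j) k"
proof -
  have "fps_exp (real r) * fps_const (1 / fact j) * UU m ^ j
      = fps_const (1 / fact j) * (fps_exp (real r) * UU m ^ j)" (is "_ = ?R") by (simp add: algebra_simps)
  hence "fps_nth (fps_exp (real r) * fps_const (1 / fact j) * UU m ^ j) k = fps_nth ?R k" by (rule arg_cong)
  thus ?thesis unfolding whitney2_def UU_def[symmetric] by simp
qed

lemma w1_eq: "whitney1 m r j i = fact j * fps_nth (FF m r i) j"
  by (simp add: whitney1_def FF_def)

lemma S_eq:
  assumes "p \<le> N"
  shows "fps_nth (\<Sum>j=0..N. fps_const (fps_nth (FF m r i) j) * UU m ^ j) p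
       = fps_nth (FF m r i oo UU m) p"
proof -
  have "fps_nth (\<Sum>j=0..N. fps_const (fps_nth (FF m r i) j) * UU m ^ j) p
     = (\<Sum>j=0..N. fps_nth (FF m r i) j * fps_nth (UU m ^ j) p)"
    by (simp add: fps_sum_nth)
  also have "\<dots> = (\<Sum>j=0..p. fps_nth (FF m r i) j * fps_nth (UU m ^ j) p)"
    using assms startsby_zero_power_prefix[OF UU0]
    by (intro sum.mono_neutral_right) auto
  also have "\<dots> = fps_nth (FF m r i oo UU m) p"
    by (simp add: fps_compose_nth)
  finally show ?thesis .
qed

lemma L5:
  assumes "m \<noteq> 0" "k \<le> N"
  shows "(\<Sum>j=0..N. whitney2 m r k j * whitney1 m r j i) = (if k = i then 1 else 0)"
proof -
  define S where "S = (\<Sum>j=0..N. fps_const (fps_nth (FF m r i) j) * UU m ^ j)"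
  have "(\<Sum>j=0..N. whitney2 m r k j * whitney1 m r j i)
     = (\<Sum>j=0..N. fact k * fps_nth (fps_exp (real r) * (fps_const (fps_nth (FF m r i) j) * UU m ^ j)) k)"
  proof (rule sum.cong[OF refl])
    fix j
    have "fps_exp (real r) * (fps_const (fps_nth (FF m r i) j) * UU m ^ j)
        = fps_const (fps_nth (FF m r i) j) * (fps_exp (real r) * UU m ^ j)"
      (is "?L = ?R") by (simp add: algebra_simps)
    hence "fps_nth ?L k = fps_nth ?R k" by (rule arg_cong)
    thus "whitney2 m r k j * whitney1 m r j i = fact k * fps_nth (fps_exp (real r) * (fps_const (fps_nth (FF m r i) j) * UU m ^ j)) k"
      by (simp add: w2_eq w1_eq)
  qed
  also have "\<dots> = fact k * fps_nth (fps_exp (real r) * S) k"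
    by (simp add: S_def sum_distrib_left fps_sum_nth)
  also have "fps_nth (fps_exp (real r) * S) k = fps_nth (fps_exp (real r) * (FF m r i oo UU m)) k"
    unfolding fps_mult_nth S_def using assms(2)
    by (intro sum.cong[OF refl]) (simp add: S_eq)
  also have "\<dots> = (if k = i then 1 / fact i else 0)"
    using assms(1) by (simp add: L4)
  finally show ?thesis by simp
qed

lemma W_upper: "k < j \<Longrightarrow> whitney2 m r k j = 0"
  using startsby_zero_power_prefix[OF UU0]
  by (simp add: w2_eq fps_mult_nth)

lemma W_diag: assumes "m \<noteq> 0" shows "whitney2 m r k k = 1"
proof -
  have "fps_nth (fps_exp (real r) * UU m ^ k) k = (\<Sum>i=0..k. fps_nth (fps_exp (real r)) (k-i) * fps_nth (UU m ^ k) i)"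
    by (simp only: mult.commute[of "fps_exp (real r)" "UU m ^ k"] fps_mult_nth
        mult.commute[of "fps_nth (UU m ^ k) _"])
  also have "\<dots> = fps_nth (fps_exp (real r)) 0 * fps_nth (UU m ^ k) k"
    using startsby_zero_power_prefix[OF UU0, of k]
    by (subst sum.remove[of _ k]) auto
  also have "\<dots> = 1"
  proof -
    have "fps_nth (UU m) 1 = 1" using assms by (simp add: UU_def)
    thus ?thesis by (simp add: startsby_zero_power_nth_same[OF UU0])
  qed
  finally show ?thesis by (simp add: w2_eq)
qed

theorem mainTheorem20:
  fixes m r n :: nat and x :: real
  assumes "m \<ge> 1" and "n \<ge> 1"
  shows "dowling m r n x =
    (-1) ^ n * det (mat (n+1) (n+1)
       (\<lambda>(i,j). if i = 0 then x ^ j else whitney1 m r j (i - 1)))"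
proof -
  have m0: "m \<noteq> 0" using assms by simp
  define M where "M = mat (n+1) (n+1)
       (\<lambda>(i,j). if i = 0 then x ^ j else whitney1 m r j (i - 1))"
  define C where "C = mat (n+1) (n+1) (\<lambda>(j,k). whitney2 m r k j)"
  define P where "P = mat (n+1) (n+1) (\<lambda>(i,k). if i = 0 then dowling m r k x
       else if k = i - 1 then 1 else (0::real))"
  have Mc: "M \<in> carrier_mat (n+1) (n+1)" by (simp add: M_def)
  have Cc: "C \<in> carrier_mat (n+1) (n+1)" by (simp add: C_def)
  have Pc: "P \<in> carrier_mat (n+1) (n+1)" by (simp add: P_def)
  have MCP: "M * C = P"
  proof (rule eq_matI)
    fix i k assume i: "i < dim_row P" and k: "k < dim_col P"
    hence i': "i < n+1" and k': "k < n+1" by (auto simp: P_def)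
    have e: "(M * C) $$ (i,k) = (\<Sum>j=0..n. M $$ (i,j) * whitney2 m r k j)"
      using i' k' by (auto simp: M_def C_def scalar_prod_def atLeastLessThanSuc_atLeastAtMost
         intro!: sum.cong)
    show "(M * C) $$ (i,k) = P $$ (i,k)"
    proof (cases "i = 0")
      case True
      have "(\<Sum>j=0..n. M $$ (i,j) * whitney2 m r k j) = (\<Sum>j=0..n. whitney2 m r k j * x ^ j)"
        using True by (intro sum.cong) (auto simp: M_def)
      also have "\<dots> = (\<Sum>j=0..k. whitney2 m r k j * x ^ j)"
        using k' W_upper by (intro sum.mono_neutral_right) auto
      finally show ?thesis using True e i' k' by (simp add: P_def dowling_def)
    next
      case False
      have "(\<Sum>j=0..n. M $$ (i,j) * whitney2 m r k j) = (\<Sum>j=0..n. whitney2 m r k j * whitney1 m r j (i-1))"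
        using False i' by (intro sum.cong) (auto simp: M_def)
      also have "\<dots> = (if k = i - 1 then 1 else 0)"
        using L5[OF m0, of k n] k' by simp
      finally show ?thesis using False e i' k' by (simp add: P_def)
    qed
  qed (auto simp: P_def M_def C_def)
  have detC: "det C = 1"
  proof -
    have "upper_triangular C" using W_upper by (auto simp: C_def upper_triangular_def)
    hence "det C = prod_list (diag_mat C)" using det_upper_triangular Cc by blast
    also have "diag_mat C = map (\<lambda>_. 1) [0..<n+1]"
      using W_diag[OF m0] by (auto simp: diag_mat_def C_def)
    finally show ?thesis by (simp add: map_replicate_const)
  qed
  have detP: "det P = (-1)^n * dowling m r n x"
  proof -
    have "det P = (\<Sum>i<n+1. P $$ (i,n) * cofactor P i n)"
      using laplace_expansion_column[OF Pc] by simp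
    also have "\<dots> = (\<Sum>i\<in>{0}. P $$ (i,n) * cofactor P i n)"
      by (intro sum.mono_neutral_right) (auto simp: P_def)
    also have "mat_delete P 0 n = 1\<^sub>m n"
      by (rule eq_matI) (auto simp: mat_delete_def P_def)
    hence "(\<Sum>i\<in>{0}. P $$ (i,n) * cofactor P i n) = dowling m r n x * (-1)^n"
      by (simp add: cofactor_def P_def)
    finally show ?thesis by simp
  qed
  have "det P = det M"
    using det_mult[OF Mc Cc] MCP detC by simp
  hence dM: "det M = (-1)^n * dowling m r n x" using detP by simp
  have "(-1::real)^n * (-1)^n = 1" by (simp flip: power_mult_distrib)
  hence "(-1)^n * det M = dowling m r n x" unfolding dM by (simp flip: mult.assoc)
  thus ?thesis unfolding M_def by simp
qed

end
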